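(* Let $\mathcal{H}$ be a complex Hilbert space, $A\in\mathcal{B}(\mathcal{H})$ positive and $S\in\mathcal{B}_A(\mathcal{H})$. For $a,b,c\in\mathcal{H}$ define $$\delta(a,b,c)=\begin{cases}\dfrac{\|b\|_A}{\|a\|_A}\left(|\langle a,c\rangle_A|\inf_{\lambda\in\mathbb{C}}\|c-\lambda b\|_A-\dfrac12\inf_{\mu\in\mathbb{C}}\|a-\mu b\|_A\right)^2 & \text{if } \|a\|_A\|b\|_A\neq 0,\\[2mm] 0 & \text{if } \|a\|_A\|b\|_A=0.\end{cases}$$ Then $$d\omega_A^2(S)\le \omega_A^2\left(S^{\sharp_A}S+S\right)+\omega_A\left(S^{\sharp_A}S^2\right)+\frac12\left\|\left(S^{\sharp_A}S\right)^2+S^{\sharp_A}S\right\|_A-2\inf_{\|z\|_A=1}\delta\left(S^{\sharp_A}Sz,\,Sz,\,z\right).$$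
   Context: $\mathcal{B}(\mathcal{H})$ denotes the bounded linear operators on $\mathcal{H}$. For positive $A$, $\langle x,z\rangle_A=\langle Ax,z\rangle$ and $\|z\|_A=\|A^{1/2}z\|$. $\mathcal{B}_A(\mathcal{H})$ is the set of $S\in\mathcal{B}(\mathcal{H})$ for which some $R\in\mathcal{B}(\mathcal{H})$ satisfies $AR=S^*A$; for such $S$, $S^{\sharp_A}=A^{\dagger}S^*A$ with $A^\dagger$ the Moore–Penrose inverse of $A$. For operators $T$ bounded with respect to $\|\cdot\|_A$: $\|T\|_A=\sup_{\|z\|_A=1}\|Tz\|_A$, $\omega_A(T)=\sup_{\|z\|_A=1}|\langle Tz,z\rangle_A|$, and $d\omega_A(T)=\sup_{\|z\|_A=1}(|\langle Tz,z\rangle_A|^2+\|Tz\|_A^4)^{1/2}$. *)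

theory Defs
  imports "HOL-Analysis.Analysis"
begin

text \<open>The library has no complex inner product spaces, so we introduce them:
  a complex vector space with an inner product linear in the first argument
  and conjugate-linear in the second (the paper's convention).\<close>

class complex_inner = ab_group_add +
  fixes scaleC :: "complex \<Rightarrow> 'a \<Rightarrow> 'a"
    and cinner :: "'a \<Rightarrow> 'a \<Rightarrow> complex"
  assumes scaleC_add_right: "scaleC a (x + y) = scaleC a x + scaleC a y"
    and scaleC_add_left: "scaleC (a + b) x = scaleC a x + scaleC b x"
    and scaleC_scaleC: "scaleC a (scaleC b x) = scaleC (a * b) x"
    and scaleC_one: "scaleC 1 x = x"
    and cinner_commute: "cinner x y = cnj (cinner y x)"
    and cinner_add_left: "cinner (x + y) z = cinner x z + cinner y z"
    and cinner_scaleC_left: "cinner (scaleC r x) y = r * cinner x y"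
    and cinner_self_nonneg: "0 \<le> Re (cinner x x)"
    and cinner_self_eq_zero: "cinner x x = 0 \<longleftrightarrow> x = 0"

definition cnorm :: "'a::complex_inner \<Rightarrow> real" where
  "cnorm x = sqrt (Re (cinner x x))"

class chilbert = complex_inner +
  assumes chilbert_complete:
    "\<And>X :: nat \<Rightarrow> 'a. (\<forall>e>0. \<exists>N. \<forall>m\<ge>N. \<forall>n\<ge>N. sqrt (Re (cinner (X m - X n) (X m - X n))) < e)
      \<Longrightarrow> (\<exists>L. \<forall>e>0. \<exists>N. \<forall>n\<ge>N. sqrt (Re (cinner (X n - L) (X n - L))) < e)"

definition bounded_op :: "('a::complex_inner \<Rightarrow> 'a) \<Rightarrow> bool" where
  "bounded_op T \<longleftrightarrow>
     (\<forall>x y. T (x + y) = T x + T y) \<and> (\<forall>c x. T (scaleC c x) = scaleC c (T x)) \<and>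
     (\<exists>K. \<forall>x. cnorm (T x) \<le> K * cnorm x)"

definition positive_op :: "('a::complex_inner \<Rightarrow> 'a) \<Rightarrow> bool" where
  "positive_op A \<longleftrightarrow> bounded_op A \<and>
     (\<forall>x. Im (cinner (A x) x) = 0 \<and> 0 \<le> Re (cinner (A x) x))"

definition adj :: "('a::complex_inner \<Rightarrow> 'a) \<Rightarrow> ('a \<Rightarrow> 'a)" where
  "adj S = (SOME T. bounded_op T \<and> (\<forall>x y. cinner (S x) y = cinner x (T y)))"

text \<open>Moore--Penrose inverse of A (densely defined on R(A) + R(A)-perp):
  for y = Ax + y2 with x in N(A)-perp and y2 in R(A)-perp, A-dagger y = x.\<close>
definition mp_inverse :: "('a::complex_inner \<Rightarrow> 'a) \<Rightarrow> 'a \<Rightarrow> 'a" where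
  "mp_inverse A y = (THE x. (\<forall>k. A k = 0 \<longrightarrow> cinner x k = 0) \<and>
      (\<exists>y2. (\<forall>w. cinner y2 (A w) = 0) \<and> y = A x + y2))"

definition in_BA :: "('a::complex_inner \<Rightarrow> 'a) \<Rightarrow> ('a \<Rightarrow> 'a) \<Rightarrow> bool" where
  "in_BA A S \<longleftrightarrow> bounded_op S \<and> (\<exists>R. bounded_op R \<and> (\<forall>x. A (R x) = adj S (A x)))"

definition sharpA :: "('a::complex_inner \<Rightarrow> 'a) \<Rightarrow> ('a \<Rightarrow> 'a) \<Rightarrow> ('a \<Rightarrow> 'a)" where
  "sharpA A S = (\<lambda>z. mp_inverse A (adj S (A z)))"

definition ipA :: "('a::complex_inner \<Rightarrow> 'a) \<Rightarrow> 'a \<Rightarrow> 'a \<Rightarrow> complex" where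
  "ipA A x z = cinner (A x) z"

definition normA :: "('a::complex_inner \<Rightarrow> 'a) \<Rightarrow> 'a \<Rightarrow> real" where
  "normA A z = sqrt (Re (cinner (A z) z))"

definition opnormA :: "('a::complex_inner \<Rightarrow> 'a) \<Rightarrow> ('a \<Rightarrow> 'a) \<Rightarrow> real" where
  "opnormA A T = (SUP z\<in>{z. normA A z = 1}. normA A (T z))"

definition omegaA :: "('a::complex_inner \<Rightarrow> 'a) \<Rightarrow> ('a \<Rightarrow> 'a) \<Rightarrow> real" where
  "omegaA A T = (SUP z\<in>{z. normA A z = 1}. cmod (ipA A (T z) z))"

definition domegaA :: "('a::complex_inner \<Rightarrow> 'a) \<Rightarrow> ('a \<Rightarrow> 'a) \<Rightarrow> real" where
  "domegaA A T = (SUP z\<in>{z. normA A z = 1}.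
      sqrt ((cmod (ipA A (T z) z))\<^sup>2 + (normA A (T z)) ^ 4))"

definition deltaA :: "('a::complex_inner \<Rightarrow> 'a) \<Rightarrow> 'a \<Rightarrow> 'a \<Rightarrow> 'a \<Rightarrow> real" where
  "deltaA A a b c =
     (if normA A a * normA A b \<noteq> 0 then
        normA A b / normA A a *
          (cmod (ipA A a c) * (INF l. normA A (c - scaleC l b))
            - 1/2 * (INF m. normA A (a - scaleC m b)))\<^sup>2
      else 0)"

end

theory Submission
  imports Defs
begin

lemma scaleC_zero_left [simp]: "scaleC 0 (x::'a::complex_inner) = 0"
proof -
  have "scaleC (0+0) x = scaleC 0 x + scaleC 0 x" by (rule scaleC_add_left)
  then show ?thesis by simp
qed

lemma scaleC_zero_right [simp]: "scaleC a (0::'a::complex_inner) = 0"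
proof -
  have "scaleC a (0+0) = scaleC a (0::'a) + scaleC a 0" by (rule scaleC_add_right)
  then show ?thesis by simp
qed

lemma scaleC_minus_right: "scaleC a (- (x::'a::complex_inner)) = - scaleC a x"
proof -
  have "scaleC a (x + - x) = scaleC a x + scaleC a (-x)" by (rule scaleC_add_right)
  then show ?thesis by (simp add: eq_neg_iff_add_eq_0 add.commute)
qed

lemma scaleC_minus_left: "scaleC (- a) (x::'a::complex_inner) = - scaleC a x"
proof -
  have "scaleC (a + - a) x = scaleC a x + scaleC (-a) x" by (rule scaleC_add_left)
  then show ?thesis by (simp add: eq_neg_iff_add_eq_0 add.commute)
qed

lemma scaleC_diff_right: "scaleC a ((x::'a::complex_inner) - y) = scaleC a x - scaleC a y"
  using scaleC_add_right[of a x "-y"] by (simp add: scaleC_minus_right)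

lemma scaleC_diff_left: "scaleC (a - b) (x::'a::complex_inner) = scaleC a x - scaleC b x"
  using scaleC_add_left[of a "-b" x] by (simp add: scaleC_minus_left)

section \<open>Semi-inner products\<close>

locale semi_ip =
  fixes h :: "'a::complex_inner \<Rightarrow> 'a \<Rightarrow> complex"
  assumes h_add_left: "h (x + y) z = h x z + h y z"
    and h_scale_left: "h (scaleC r x) y = r * h x y"
    and h_herm: "h x y = cnj (h y x)"
    and h_pos: "0 \<le> Re (h x x)"
begin

definition nrm :: "'a \<Rightarrow> real" where "nrm x = sqrt (Re (h x x))"

lemma h_add_right: "h x (y + z) = h x y + h x z"
  by (metis h_herm h_add_left complex_cnj_add)

lemma h_scale_right: "h x (scaleC r y) = cnj r * h x y"
  by (metis h_herm h_scale_left complex_cnj_mult)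

lemma h_zero_left [simp]: "h 0 y = 0"
  using h_scale_left[of 0 0 y] by simp

lemma h_zero_right [simp]: "h x 0 = 0"
  using h_scale_right[of x 0 0] by simp

lemma h_minus_left: "h (- x) y = - h x y"
  using h_add_left[of x "-x" y] by (simp add: eq_neg_iff_add_eq_0 add.commute)

lemma h_minus_right: "h x (- y) = - h x y"
  using h_add_right[of x y "-y"] by (simp add: eq_neg_iff_add_eq_0 add.commute)

lemma h_diff_left: "h (x - y) z = h x z - h y z"
  using h_add_left[of x "-y" z] by (simp add: h_minus_left)

lemma h_diff_right: "h x (y - z) = h x y - h x z"
  using h_add_right[of x y "-z"] by (simp add: h_minus_right)

lemma h_self_real: "Im (h x x) = 0"
proof -
  have "Im (h x x) = Im (cnj (h x x))" using h_herm[of x x] by simp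
  then show ?thesis by simp
qed

lemma h_self_eq: "h x x = complex_of_real (Re (h x x))"
  using h_self_real[of x] by (simp add: complex_eq_iff)

lemma nrm_nonneg: "0 \<le> nrm x" using h_pos[of x] by (simp add: nrm_def)

lemma nrm_sq: "(nrm x)\<^sup>2 = Re (h x x)"
  using h_pos[of x] by (simp add: nrm_def)

lemma h_expand: "h (x - scaleC t y) (x - scaleC t y)
   = h x x - cnj t * h x y - t * h y x + t * cnj t * h y y"
  by (simp add: h_diff_left h_diff_right h_scale_left h_scale_right algebra_simps)

lemma cauchy_schwarz_sq: "(cmod (h x y))\<^sup>2 \<le> Re (h x x) * Re (h y y)"
proof (cases "Re (h y y) = 0")
  case True
  have "h x y = 0"
  proof (rule ccontr)
    assume ne: "h x y \<noteq> 0"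
    define t where "t = complex_of_real (Re (h x x) + 1) / cnj (h x y)"
    have "0 \<le> Re (h (x - scaleC t y) (x - scaleC t y))" by (rule h_pos)
    also have "h (x - scaleC t y) (x - scaleC t y) = h x x - cnj t * h x y - t * h y x + t * cnj t * h y y"
      by (rule h_expand)
    also have "h y y = 0" using True h_self_eq[of y] by simp
    also have "cnj t * h x y = complex_of_real (Re (h x x) + 1)"
      using ne by (simp add: t_def)
    also have "t * h y x = complex_of_real (Re (h x x) + 1)"
      using ne h_herm[of y x] by (simp add: t_def)
    finally show False using h_pos[of x] by simp
  qed
  then show ?thesis using h_pos[of x] h_pos[of y] by simp
next
  case False
  then have pos: "0 < Re (h y y)" using h_pos[of y] by simp
  define t where "t = h x y / h y y"
  have hyy: "h y y = complex_of_real (Re (h y y))" by (rule h_self_eq)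
  have "0 \<le> Re (h (x - scaleC t y) (x - scaleC t y))" by (rule h_pos)
  also have "h (x - scaleC t y) (x - scaleC t y) = h x x - cnj t * h x y - t * h y x + t * cnj t * h y y"
    by (rule h_expand)
  also have "\<dots> = h x x - complex_of_real ((cmod (h x y))\<^sup>2 / Re (h y y))"
  proof -
    have e1: "cnj t * h x y = complex_of_real ((cmod (h x y))\<^sup>2 / Re (h y y))"
      unfolding t_def using hyy 
      by (metis complex_cnj_complex_of_real complex_cnj_divide complex_norm_square
          mult.commute of_real_divide of_real_power times_divide_eq_left)
    have e2: "t * h y x = complex_of_real ((cmod (h x y))\<^sup>2 / Re (h y y))"
    proof -
      have "t * h y x = h x y * cnj (h x y) / h y y" using h_herm[of y x] by (simp add: t_def)
      also have "\<dots> = complex_of_real ((cmod (h x y))\<^sup>2) / complex_of_real (Re (h y y))"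
        using hyy complex_norm_square[of "h x y"] by simp
      finally show ?thesis by simp
    qed
    have e3: "t * cnj t * h y y = complex_of_real ((cmod (h x y))\<^sup>2 / Re (h y y))"
    proof -
      have ne: "h y y \<noteq> 0" using pos hyy by (metis less_irrefl zero_complex.simps(1))
      have c: "cnj (h y y) = h y y" using hyy by (metis complex_cnj_complex_of_real)
      have "t * cnj t * h y y = h x y * cnj (h x y) / h y y" 
        unfolding t_def using ne c by (simp add: field_simps)
      also have "\<dots> = complex_of_real ((cmod (h x y))\<^sup>2) / complex_of_real (Re (h y y))"
        using hyy complex_norm_square[of "h x y"] by simp
      finally show ?thesis by simp
    qed
    show ?thesis using e1 e2 e3 by simp
  qed
  finally have "(cmod (h x y))\<^sup>2 / Re (h y y) \<le> Re (h x x)" by simp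
  then show ?thesis using pos by (simp add: divide_le_eq mult.commute)
qed

lemma cauchy_schwarz: "cmod (h x y) \<le> nrm x * nrm y"
proof -
  have "(cmod (h x y))\<^sup>2 \<le> (nrm x * nrm y)\<^sup>2"
    using cauchy_schwarz_sq[of x y] by (simp add: power_mult_distrib nrm_sq)
  then show ?thesis using nrm_nonneg[of x] nrm_nonneg[of y]
    by (meson power2_le_imp_le mult_nonneg_nonneg)
qed

end

lemma buz_real:
  fixes \<alpha> \<beta> p q \<gamma> Dc Da :: real
  assumes a: "\<alpha> > 0" and b: "\<beta> > 0" and p: "p \<ge> 0" and q: "q \<ge> 0" and g: "\<gamma> \<ge> 0"
    and dc: "Dc \<ge> 0" and da: "Da \<ge> 0"
    and dc2: "Dc\<^sup>2 = 1 - q\<^sup>2 / \<beta>\<^sup>2" and da2: "Da\<^sup>2 = \<alpha>\<^sup>2 - \<gamma>\<^sup>2 / \<beta>\<^sup>2"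
    and key: "p \<le> \<gamma> * q / \<beta>\<^sup>2 + Da * Dc"
  shows "p * q \<le> 1/2 * (\<alpha> * \<beta> + \<gamma>) - \<beta> / \<alpha> * (p * Dc - 1/2 * Da)\<^sup>2"
proof -
  define q' where "q' = q / \<beta>"
  define g' where "g' = \<gamma> / \<beta>"
  have q_eq: "q = \<beta> * q'" and g_eq: "\<gamma> = \<beta> * g'" using b by (auto simp: q'_def g'_def)
  have dc2': "Dc\<^sup>2 = 1 - q'\<^sup>2" using dc2 b by (simp add: q'_def power_divide)
  have da2': "Da\<^sup>2 = \<alpha>\<^sup>2 - g'\<^sup>2" using da2 b by (simp add: g'_def power_divide)
  have key': "p \<le> g' * q' + Da * Dc" using key b
    by (simp add: q'_def g'_def power2_eq_square field_simps)
  have E: "1/2 * \<alpha> * (\<alpha> + g') - \<alpha> * p * q' - (p * Dc - 1/2 * Da)\<^sup>2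
      = (1/2 * (\<alpha> + g') - p * q')\<^sup>2 + g' * p * q' - p\<^sup>2 + p * Dc * Da"
  proof -
    have "(p * Dc - 1/2 * Da)\<^sup>2 = p\<^sup>2 * Dc\<^sup>2 - p * Dc * Da + 1/4 * Da\<^sup>2"
      by (simp add: power2_eq_square algebra_simps)
    also have "\<dots> = p\<^sup>2 * (1 - q'\<^sup>2) - p * Dc * Da + 1/4 * (\<alpha>\<^sup>2 - g'\<^sup>2)"
      by (simp add: dc2' da2')
    finally have "(p * Dc - 1/2 * Da)\<^sup>2 = p\<^sup>2 * (1 - q'\<^sup>2) - p * Dc * Da + 1/4 * (\<alpha>\<^sup>2 - g'\<^sup>2)" .
    then show ?thesis unfolding power2_eq_square by (simp add: algebra_simps) (simp add: field_simps)
  qed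
  have "p\<^sup>2 \<le> p * (g' * q' + Da * Dc)"
    using key' p by (simp add: power2_eq_square mult_left_mono)
  then have "0 \<le> g' * p * q' - p\<^sup>2 + p * Dc * Da" by (simp add: algebra_simps)
  then have E0: "0 \<le> 1/2 * \<alpha> * (\<alpha> + g') - \<alpha> * p * q' - (p * Dc - 1/2 * Da)\<^sup>2"
    using E by (smt (verit) zero_le_power2)
  have "\<beta> / \<alpha> * (\<alpha> * p * q') \<le> \<beta> / \<alpha> * (1/2 * \<alpha> * (\<alpha> + g') - (p * Dc - 1/2 * Da)\<^sup>2)"
    using E0 a b by (intro mult_left_mono) auto
  then show ?thesis using a b unfolding q_eq g_eq by (simp add: field_simps)
qed

context semi_ip
begin

lemma h_scale_self: "h (scaleC c x) (scaleC c x) = complex_of_real ((cmod c)\<^sup>2) * h x x"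
proof -
  have "h (scaleC c x) (scaleC c x) = c * cnj c * h x x" by (simp add: h_scale_left h_scale_right)
  then show ?thesis by (metis complex_norm_square)
qed

lemma nrm_scale: "nrm (scaleC c x) = cmod c * nrm x"
proof -
  have "Re (h (scaleC c x) (scaleC c x)) = (cmod c)\<^sup>2 * Re (h x x)"
    by (simp add: h_scale_self)
  then show ?thesis by (simp add: nrm_def real_sqrt_mult)
qed

lemma h_add_self: "Re (h (x + y) (x + y)) = Re (h x x) + 2 * Re (h x y) + Re (h y y)"
proof -
  have "h (x + y) (x + y) = h x x + h x y + h y x + h y y"
    by (simp add: h_add_left h_add_right)
  moreover have "Re (h y x) = Re (h x y)" using h_herm[of y x] by simp
  ultimately show ?thesis by simp
qed

lemma nrm_triangle: "nrm (x + y) \<le> nrm x + nrm y"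
proof -
  have "Re (h x y) \<le> nrm x * nrm y"
    using cauchy_schwarz[of x y] complex_Re_le_cmod[of "h x y"] by linarith
  then have "(nrm (x + y))\<^sup>2 \<le> (nrm x + nrm y)\<^sup>2"
    by (simp add: nrm_sq h_add_self power2_eq_square algebra_simps nrm_sq[unfolded power2_eq_square])
  then show ?thesis using nrm_nonneg[of x] nrm_nonneg[of y] nrm_nonneg[of "x+y"]
    by (meson add_nonneg_nonneg power2_le_imp_le)
qed

lemma nrm_zero_h: "nrm x = 0 \<Longrightarrow> h x y = 0"
  using cauchy_schwarz[of x y] by simp

lemma nrm_zero_h': "nrm y = 0 \<Longrightarrow> h x y = 0"
  using cauchy_schwarz[of x y] by simp

lemma proj_orth:
  assumes "0 < nrm b"
  shows "h (u - scaleC (h u b / h b b) b) b = 0"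
proof -
  have "h b b \<noteq> 0" using assms by (auto simp: nrm_def)
  then show ?thesis by (simp add: h_diff_left h_scale_left)
qed

lemma proj_sq:
  assumes "0 < nrm b"
  shows "(nrm (u - scaleC (h u b / h b b) b))\<^sup>2 = Re (h u u) - (cmod (h u b))\<^sup>2 / Re (h b b)"
proof -
  define u' where "u' = u - scaleC (h u b / h b b) b"
  have o: "h u' b = 0" using proj_orth[OF assms] by (simp add: u'_def)
  have hbb: "h b b = complex_of_real (Re (h b b))" by (rule h_self_eq)
  have "h u' u' = h u' u - cnj (h u b / h b b) * h u' b"
    by (simp add: u'_def h_diff_right h_scale_right)
  also have "\<dots> = h u u - h u b / h b b * h b u"
    by (simp add: o u'_def h_diff_left h_scale_left)
  also have "\<dots> = h u u - h u b * cnj (h u b) / complex_of_real (Re (h b b))"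
    using h_herm[of b u] hbb by simp
  also have "\<dots> = h u u - complex_of_real ((cmod (h u b))\<^sup>2 / Re (h b b))"
    using complex_norm_square[of "h u b"] by simp
  finally show ?thesis by (simp add: nrm_sq u'_def)
qed

lemma dist_inf:
  assumes "0 < nrm b"
  shows "(INF l. nrm (u - scaleC l b)) = nrm (u - scaleC (h u b / h b b) b)"
proof -
  define l0 where "l0 = h u b / h b b"
  define u' where "u' = u - scaleC l0 b"
  have o: "h u' b = 0" using proj_orth[OF assms] by (simp add: u'_def l0_def)
  have o': "h b u' = 0" using o h_herm[of b u'] by simp
  have ge: "nrm u' \<le> nrm (u - scaleC l b)" for l
  proof -
    have e: "u - scaleC l b = u' + scaleC (l0 - l) b"
      by (simp add: u'_def scaleC_diff_left)
    have "Re (h (u' + scaleC (l0 - l) b) (u' + scaleC (l0 - l) b))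
        = Re (h u' u') + (cmod (l0 - l))\<^sup>2 * Re (h b b)"
    proof -
      have "h u' (scaleC (l0 - l) b) = 0" using o by (simp add: h_scale_right)
      then show ?thesis using h_add_self[of u' "scaleC (l0 - l) b"] by (simp add: h_scale_self)
    qed
    then have "(nrm u')\<^sup>2 \<le> (nrm (u - scaleC l b))\<^sup>2"
      unfolding e nrm_sq using h_pos[of b] by simp
    then show ?thesis using nrm_nonneg by (meson power2_le_imp_le)
  qed
  show ?thesis
    unfolding l0_def[symmetric] u'_def[symmetric]
    by (rule cInf_eq_minimum) (auto simp: u'_def ge[unfolded u'_def])
qed

lemma buzano_refined:
  assumes c1: "nrm c = 1" and pa: "0 < nrm a" and pb: "0 < nrm b"
  shows "cmod (h a c) * cmod (h c b) \<le> 1/2 * (nrm a * nrm b + cmod (h a b))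
     - nrm b / nrm a * (cmod (h a c) * (INF l. nrm (c - scaleC l b))
         - 1/2 * (INF m. nrm (a - scaleC m b)))\<^sup>2"
proof -
  define a' where "a' = a - scaleC (h a b / h b b) b"
  define c' where "c' = c - scaleC (h c b / h b b) b"
  have hbb: "h b b = complex_of_real ((nrm b)\<^sup>2)" using h_self_eq[of b] by (simp add: nrm_sq)
  have hbb0: "h b b \<noteq> 0" using pb hbb by simp
  have Dc: "(INF l. nrm (c - scaleC l b)) = nrm c'" unfolding c'_def by (rule dist_inf[OF pb])
  have Da: "(INF l. nrm (a - scaleC l b)) = nrm a'" unfolding a'_def by (rule dist_inf[OF pb])
  have dc2: "(nrm c')\<^sup>2 = 1 - (cmod (h c b))\<^sup>2 / (nrm b)\<^sup>2"
    using proj_sq[OF pb, of c] c1 unfolding c'_def by (simp add: nrm_sq[symmetric])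
  have da2: "(nrm a')\<^sup>2 = (nrm a)\<^sup>2 - (cmod (h a b))\<^sup>2 / (nrm b)\<^sup>2"
    using proj_sq[OF pb, of a] unfolding a'_def by (simp add: nrm_sq[symmetric])
  have oc: "h a' b = 0" using proj_orth[OF pb] by (simp add: a'_def)
  have "h a' c' = h a' c" using oc by (simp add: c'_def h_diff_right h_scale_right)
  also have "\<dots> = h a c - h a b / h b b * h b c" by (simp add: a'_def h_diff_left h_scale_left)
  finally have hac: "h a c = h a' c' + h a b * h b c / h b b" by simp
  have "cmod (h a c) \<le> cmod (h a' c') + cmod (h a b * h b c / h b b)"
    unfolding hac by (rule norm_triangle_ineq)
  also have "cmod (h a b * h b c / h b b) = cmod (h a b) * cmod (h c b) / (nrm b)\<^sup>2"
    using hbb h_herm[of b c] by (simp add: norm_mult norm_divide norm_power)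
  finally have key: "cmod (h a c) \<le> cmod (h a b) * cmod (h c b) / (nrm b)\<^sup>2 + nrm a' * nrm c'"
    using cauchy_schwarz[of a' c'] by linarith
  show ?thesis unfolding Dc Da
    by (rule buz_real[OF pa pb _ _ _ nrm_nonneg nrm_nonneg dc2 da2 key]) auto
qed

end

interpretation H: semi_ip "cinner :: 'a::complex_inner \<Rightarrow> 'a \<Rightarrow> complex"
  by unfold_locales (rule cinner_add_left cinner_scaleC_left cinner_commute cinner_self_nonneg)+

lemma cnorm_eq: "cnorm = H.nrm"
  by (simp add: fun_eq_iff cnorm_def H.nrm_def)

lemma scaleC_two: "scaleC 2 (x::'a::complex_inner) = x + x"
  using scaleC_add_left[of 1 1 x] by (simp add: scaleC_one)

context semi_ip begin
lemma nrm_minus: "nrm (- x) = nrm x"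
  using nrm_scale[of "-1" x] by (simp add: scaleC_minus_left scaleC_one)
lemma nrm_commute: "nrm (x - y) = nrm (y - x)"
  using nrm_minus[of "x - y"] by simp
lemma parallelogram: "(nrm (x + y))\<^sup>2 + (nrm (x - y))\<^sup>2 = 2 * (nrm x)\<^sup>2 + 2 * (nrm y)\<^sup>2"
proof -
  have "Re (h (x - y) (x - y)) = Re (h x x) - 2 * Re (h x y) + Re (h y y)"
    using h_add_self[of x "-y"] by (simp add: h_minus_left h_minus_right)
  then show ?thesis using h_add_self[of x y] by (simp add: nrm_sq)
qed
end

lemma cinner_ext: "(\<And>x. cinner x u = cinner x v) \<Longrightarrow> (u::'a::complex_inner) = v"
proof -
  assume a: "\<And>x. cinner x u = cinner x v"
  have "cinner (u - v) (u - v) = 0" using a[of "u - v"] by (simp add: H.h_diff_right)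
  then show ?thesis by (simp add: cinner_self_eq_zero)
qed

definition cconv :: "(nat \<Rightarrow> 'a::complex_inner) \<Rightarrow> 'a \<Rightarrow> bool" where
  "cconv X L \<longleftrightarrow> (\<forall>e>0. \<exists>N. \<forall>n\<ge>N. cnorm (X n - L) < e)"

definition cclosed :: "'a::complex_inner set \<Rightarrow> bool" where
  "cclosed M \<longleftrightarrow> (\<forall>X L. (\<forall>n. X n \<in> M) \<and> cconv X L \<longrightarrow> L \<in> M)"

definition csubspace :: "'a::complex_inner set \<Rightarrow> bool" where
  "csubspace M \<longleftrightarrow> 0 \<in> M \<and> (\<forall>x\<in>M. \<forall>y\<in>M. x + y \<in> M) \<and> (\<forall>x\<in>M. \<forall>c. scaleC c x \<in> M)"

lemma small_inv: "e > 0 \<Longrightarrow> \<exists>N::nat. \<forall>n\<ge>N. 1 / (real n + 1) < e"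
proof -
  assume e: "e > 0"
  obtain N where N: "inverse (real (Suc N)) < e" using reals_Archimedean[OF e] by blast
  have "1 / (real n + 1) < e" if "n \<ge> N" for n
  proof -
    have "1 / (real n + 1) \<le> 1 / (real N + 1)" using that by (simp add: frac_le)
    then show ?thesis using N by (simp add: inverse_eq_divide add.commute)
  qed
  then show ?thesis by blast
qed

lemma projection:
  fixes M :: "'a::chilbert set" and x :: 'a
  assumes sub: "csubspace M" and cl: "cclosed M"
  shows "\<exists>m\<in>M. \<forall>k\<in>M. cinner (x - m) k = 0"
proof -
  define D where "D = (\<lambda>m. (cnorm (x - m))\<^sup>2) ` M"
  define d where "d = Inf D"
  have M0: "0 \<in> M" using sub by (simp add: csubspace_def)
  have Dne: "D \<noteq> {}" using M0 by (auto simp: D_def)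
  have Dbdd: "bdd_below D" by (auto simp: D_def intro!: bdd_belowI[of _ 0])
  have dle: "d \<le> (cnorm (x - m))\<^sup>2" if "m \<in> M" for m
    unfolding d_def using that Dbdd by (auto simp: D_def intro!: cInf_lower)
  have d0: "0 \<le> d" unfolding d_def using Dne by (auto simp: D_def intro!: cInf_greatest)
  have "\<forall>n. \<exists>m. m \<in> M \<and> (cnorm (x - m))\<^sup>2 < d + 1 / (real n + 1)"
  proof
    fix n
    have "Inf D < d + 1 / (real n + 1)" unfolding d_def by (simp add: add_pos_pos)
    then obtain y where "y \<in> D" "y < d + 1 / (real n + 1)" using cInf_lessD[OF Dne] by blast
    then show "\<exists>m. m \<in> M \<and> (cnorm (x - m))\<^sup>2 < d + 1 / (real n + 1)" by (auto simp: D_def)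
  qed
  then obtain X where XM: "\<And>n. X n \<in> M" and Xd: "\<And>n. (cnorm (x - X n))\<^sup>2 < d + 1 / (real n + 1)"
    by metis
  have mid: "(cnorm (X m - X n))\<^sup>2 \<le> 2 / (real m + 1) + 2 / (real n + 1)" for m n
  proof -
    define c where "c = scaleC (1/2) (X m + X n)"
    have cM: "c \<in> M" using sub XM by (simp add: csubspace_def c_def)
    have e1: "(x - X m) + (x - X n) = scaleC 2 (x - c)"
    proof -
      have "scaleC 2 c = X m + X n" unfolding c_def by (simp add: scaleC_scaleC scaleC_one)
      then have "scaleC 2 (x - c) = (x + x) - (X m + X n)" by (simp add: scaleC_diff_right scaleC_two)
      then show ?thesis by (simp add: add_diff_add)
    qed
    have e2: "(x - X m) - (x - X n) = - (X m - X n)" by simp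
    have "(cnorm (scaleC 2 (x - c)))\<^sup>2 = 4 * (cnorm (x - c))\<^sup>2"
      by (simp add: cnorm_eq H.nrm_scale power_mult_distrib)
    then have "(cnorm (X m - X n))\<^sup>2 = 2 * (cnorm (x - X m))\<^sup>2 + 2 * (cnorm (x - X n))\<^sup>2 - 4 * (cnorm (x - c))\<^sup>2"
      using H.parallelogram[of "x - X m" "x - X n"] unfolding e1 e2 cnorm_eq H.nrm_minus by linarith
    then show ?thesis using Xd[of m] Xd[of n] dle[OF cM] by linarith
  qed
  have "\<exists>L. \<forall>e>0. \<exists>N. \<forall>n\<ge>N. sqrt (Re (cinner (X n - L) (X n - L))) < e"
  proof (rule chilbert_complete, intro allI impI)
    fix e :: real assume e: "e > 0"
    obtain N where N: "\<And>n. n \<ge> N \<Longrightarrow> 1 / (real n + 1) < e\<^sup>2 / 4"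
      using small_inv[of "e\<^sup>2/4"] e by auto
    have "sqrt (Re (cinner (X m - X n) (X m - X n))) < e" if "m \<ge> N" "n \<ge> N" for m n
    proof -
      have "(cnorm (X m - X n))\<^sup>2 < e\<^sup>2" using mid[of m n] N[OF that(1)] N[OF that(2)] by linarith
      then have "cnorm (X m - X n) < e" using e power_less_imp_less_base[of "cnorm (X m - X n)" 2 e] by linarith
      then show ?thesis by (simp add: cnorm_def)
    qed
    then show "\<exists>N. \<forall>m\<ge>N. \<forall>n\<ge>N. sqrt (Re (cinner (X m - X n) (X m - X n))) < e" by blast
  qed
  then obtain L where L: "cconv X L" unfolding cconv_def cnorm_def by blast
  have LM: "L \<in> M" using cl XM L unfolding cclosed_def by blast
  have wd: "(cnorm (x - L))\<^sup>2 \<le> d"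
  proof (rule ccontr)
    assume "\<not> ?thesis"
    then have gt: "(sqrt d)\<^sup>2 < (cnorm (x - L))\<^sup>2" using d0 by simp
    define r where "r = cnorm (x - L)"
    define s where "s = sqrt d"
    have rs: "s < r" using gt unfolding r_def s_def
      by (metis cnorm_eq H.nrm_nonneg power_less_imp_less_base)
    define e where "e = (r - s) / 3"
    have e: "e > 0" using rs by (simp add: e_def)
    obtain N1 where N1: "\<And>n. n \<ge> N1 \<Longrightarrow> cnorm (X n - L) < e" using L e unfolding cconv_def by blast
    obtain N2 where N2: "\<And>n. n \<ge> N2 \<Longrightarrow> 1 / (real n + 1) < e\<^sup>2" using small_inv[of "e\<^sup>2"] e by auto
    define n where "n = max N1 N2"
    have s0: "0 \<le> s" by (simp add: s_def d0)
    have "(cnorm (x - X n))\<^sup>2 < (s + e)\<^sup>2"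
    proof -
      have "(cnorm (x - X n))\<^sup>2 < d + e\<^sup>2" using Xd[of n] N2[of n] by (simp add: n_def)
      also have "d + e\<^sup>2 \<le> (s + e)\<^sup>2" using s0 e d0 by (simp add: s_def power2_eq_square algebra_simps)
      finally show ?thesis .
    qed
    then have a: "cnorm (x - X n) < s + e" using s0 e
      by (metis add_nonneg_nonneg less_imp_le power_less_imp_less_base)
    have b: "cnorm (X n - L) < e" using N1[of n] by (simp add: n_def)
    have "r \<le> cnorm (x - X n) + cnorm (X n - L)"
      unfolding r_def cnorm_eq using H.nrm_triangle[of "x - X n" "X n - L"] by simp
    then have "r < s + e + e" using a b by linarith
    then show False using rs unfolding e_def by (simp add: field_simps)
  qed
  have "\<forall>k\<in>M. cinner (x - L) k = 0"
  proof
    fix k assume kM: "k \<in> M"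
    show "cinner (x - L) k = 0"
    proof (rule ccontr)
      assume ne: "cinner (x - L) k \<noteq> 0"
      have kpos: "0 < H.nrm k"
      proof (rule ccontr)
        assume "\<not> 0 < H.nrm k"
        then have "H.nrm k = 0" using H.nrm_nonneg[of k] by linarith
        then show False using ne H.nrm_zero_h'[of k "x - L"] by simp
      qed
      define t where "t = cinner (x - L) k / cinner k k"
      have tM: "L + scaleC t k \<in> M" using sub LM kM by (simp add: csubspace_def)
      have eq: "x - (L + scaleC t k) = (x - L) - scaleC t k" by simp
      have "(H.nrm ((x - L) - scaleC t k))\<^sup>2 = Re (cinner (x - L) (x - L)) - (cmod (cinner (x - L) k))\<^sup>2 / Re (cinner k k)"
        unfolding t_def by (rule H.proj_sq[OF kpos])
      moreover have "0 < (cmod (cinner (x - L) k))\<^sup>2 / Re (cinner k k)"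
        using ne kpos by (simp add: H.nrm_sq[symmetric])
      ultimately have "(H.nrm ((x - L) - scaleC t k))\<^sup>2 < (H.nrm (x - L))\<^sup>2"
        by (simp add: H.nrm_sq)
      moreover have "d \<le> (H.nrm ((x - L) - scaleC t k))\<^sup>2"
        using dle[OF tM] unfolding eq cnorm_eq .
      ultimately show False using wd unfolding cnorm_eq by linarith
    qed
  qed
  then show ?thesis using LM by blast
qed

lemma riesz:
  fixes f :: "'a::chilbert \<Rightarrow> complex"
  assumes add: "\<And>x y. f (x + y) = f x + f y" and sc: "\<And>c x. f (scaleC c x) = c * f x"
    and bd: "\<And>x. cmod (f x) \<le> K * cnorm x"
  shows "\<exists>w. \<forall>x. f x = cinner x w"
proof (cases "\<forall>x. f x = 0")
  case True
  then show ?thesis by (intro exI[of _ 0]) simp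
next
  case False
  then obtain u where fu: "f u \<noteq> 0" by blast
  have f0: "f 0 = 0" using add[of 0 0] by simp
  have fdiff: "f (a - b) = f a - f b" for a b using add[of "a - b" b] by simp
  define M where "M = {x. f x = 0}"
  have sub: "csubspace M" unfolding csubspace_def M_def using f0 add sc by auto
  have cl: "cclosed M" unfolding cclosed_def
  proof (intro allI impI)
    fix X L assume a: "(\<forall>n. X n \<in> M) \<and> cconv X L"
    show "L \<in> M"
    proof (rule ccontr)
      assume "L \<notin> M"
      then have pos: "0 < cmod (f L)" by (simp add: M_def)
      define e where "e = cmod (f L) / (\<bar>K\<bar> + 1)"
      have e: "e > 0" using pos by (simp add: e_def)
      obtain N where N: "\<And>n. n \<ge> N \<Longrightarrow> cnorm (X n - L) < e" using a e unfolding cconv_def by blast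
      have "f L = f (L - X N)" using a by (simp add: fdiff M_def)
      then have "cmod (f L) \<le> K * cnorm (L - X N)" using bd by simp
      also have "\<dots> \<le> \<bar>K\<bar> * cnorm (L - X N)"
        by (intro mult_right_mono) (auto simp: cnorm_eq H.nrm_nonneg)
      also have "\<dots> \<le> \<bar>K\<bar> * e" using N[of N]
        by (intro mult_left_mono) (auto simp: cnorm_eq H.nrm_commute[of L])
      also have "\<dots> < cmod (f L)" using pos unfolding e_def by (simp add: field_simps)
      finally show False by simp
    qed
  qed
  obtain m where mM: "m \<in> M" and orth: "\<And>k. k \<in> M \<Longrightarrow> cinner (u - m) k = 0"
    using projection[OF sub cl, of u] by blast
  define v where "v = u - m"
  have fv: "f v = f u" using mM by (simp add: v_def fdiff M_def)
  have vne: "cinner v v \<noteq> 0" using fv fu f0 by (auto simp: cinner_self_eq_zero)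
  have "f x = cinner x (scaleC (cnj (f v / cinner v v)) v)" for x
  proof -
    define z where "z = scaleC (f x) v - scaleC (f v) x"
    have "f z = 0" by (simp add: z_def fdiff sc)
    then have "cinner v z = 0" using orth[of z] by (simp add: M_def v_def)
    then have "cinner z v = 0" using cinner_commute[of z v] by simp
    then have "f x * cinner v v = f v * cinner x v"
      by (simp add: z_def H.h_diff_left cinner_scaleC_left)
    then show ?thesis using vne by (simp add: H.h_scale_right field_simps)
  qed
  then show ?thesis by blast
qed

lemma cnorm_pos: "(x::'a::complex_inner) \<noteq> 0 \<Longrightarrow> 0 < cnorm x"
proof -
  assume x: "x \<noteq> 0"
  have "cnorm x \<noteq> 0"
  proof
    assume "cnorm x = 0"
    then have "Re (cinner x x) = 0" using H.nrm_sq[of x] by (simp add: cnorm_eq)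
    then have "cinner x x = 0" using H.h_self_eq[of x] by simp
    then show False using x by (simp add: cinner_self_eq_zero)
  qed
  then show ?thesis using H.nrm_nonneg[of x] by (simp add: cnorm_eq)
qed

lemma bop_add: "bounded_op T \<Longrightarrow> T (x + y) = T x + T y" by (simp add: bounded_op_def)
lemma bop_scale: "bounded_op T \<Longrightarrow> T (scaleC c x) = scaleC c (T x)" by (simp add: bounded_op_def)
lemma bop_zero: "bounded_op T \<Longrightarrow> T 0 = 0" using bop_add[of T 0 0] by simp
lemma bop_diff: "bounded_op T \<Longrightarrow> T (x - y) = T x - T y"
  using bop_add[of T "x - y" y] by (simp add: eq_diff_eq)
lemma bop_bound: "bounded_op T \<Longrightarrow> \<exists>K\<ge>0. \<forall>x. cnorm (T x) \<le> K * cnorm x"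
proof -
  assume "bounded_op T"
  then obtain K where K: "\<And>x. cnorm (T x) \<le> K * cnorm x" by (auto simp: bounded_op_def)
  have "cnorm (T x) \<le> \<bar>K\<bar> * cnorm x" for x
    using K[of x] by (smt (verit) abs_ge_self cnorm_eq H.nrm_nonneg mult_right_mono)
  then show ?thesis by (intro exI[of _ "\<bar>K\<bar>"]) auto
qed

lemma adj_exists:
  fixes S :: "'a::chilbert \<Rightarrow> 'a"
  assumes S: "bounded_op S"
  shows "\<exists>T. bounded_op T \<and> (\<forall>x y. cinner (S x) y = cinner x (T y))"
proof -
  obtain K where K0: "K \<ge> 0" and K: "\<And>x. cnorm (S x) \<le> K * cnorm x" using bop_bound[OF S] by blast
  have ex: "\<exists>w. \<forall>x. cinner (S x) y = cinner x w" for y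
  proof (rule riesz[where K = "K * cnorm y"])
    show "cinner (S (x + z)) y = cinner (S x) y + cinner (S z) y" for x z
      by (simp add: bop_add[OF S] cinner_add_left)
    show "cinner (S (scaleC c x)) y = c * cinner (S x) y" for c x
      by (simp add: bop_scale[OF S] cinner_scaleC_left)
    show "cmod (cinner (S x) y) \<le> K * cnorm y * cnorm x" for x
    proof -
      have "cmod (cinner (S x) y) \<le> cnorm (S x) * cnorm y" by (simp add: cnorm_eq H.cauchy_schwarz)
      also have "\<dots> \<le> K * cnorm x * cnorm y" using K[of x] by (intro mult_right_mono) (auto simp: cnorm_eq H.nrm_nonneg)
      finally show ?thesis by (simp add: ac_simps)
    qed
  qed
  define T where "T y = (SOME w. \<forall>x. cinner (S x) y = cinner x w)" for y
  have TP: "cinner (S x) y = cinner x (T y)" for x y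
    using someI_ex[OF ex[of y]] unfolding T_def by blast
  have "bounded_op T" unfolding bounded_op_def
  proof (intro conjI allI)
    show "T (x + y) = T x + T y" for x y
      by (rule cinner_ext) (simp add: TP[symmetric] H.h_add_right)
    show "T (scaleC c x) = scaleC c (T x)" for c x
      by (rule cinner_ext) (simp add: TP[symmetric] H.h_scale_right)
    have "cnorm (T y) \<le> K * cnorm y" for y
    proof (cases "cnorm (T y) = 0")
      case True then show ?thesis using K0 by (simp add: cnorm_eq H.nrm_nonneg)
    next
      case False
      then have pos: "0 < cnorm (T y)" by (simp add: cnorm_eq H.nrm_nonneg less_le)
      have "(cnorm (T y))\<^sup>2 = Re (cinner (S (T y)) y)" by (simp add: TP cnorm_eq H.nrm_sq)
      also have "\<dots> \<le> cmod (cinner (S (T y)) y)" by (rule complex_Re_le_cmod)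
      also have "\<dots> \<le> cnorm (S (T y)) * cnorm y" by (simp add: cnorm_eq H.cauchy_schwarz)
      also have "\<dots> \<le> K * cnorm (T y) * cnorm y" using K by (intro mult_right_mono) (auto simp: cnorm_eq H.nrm_nonneg)
      finally have "cnorm (T y) * cnorm (T y) \<le> cnorm (T y) * (K * cnorm y)" by (simp add: power2_eq_square ac_simps)
      then show ?thesis using pos by simp
    qed
    then show "\<exists>K. \<forall>x. cnorm (T x) \<le> K * cnorm x" by blast
  qed
  then show ?thesis using TP by blast
qed

lemma adj_prop:
  fixes S :: "'a::chilbert \<Rightarrow> 'a"
  assumes "bounded_op S"
  shows "cinner (S x) y = cinner x (adj S y)" and "bounded_op (adj S)"
proof -
  have "bounded_op (adj S) \<and> (\<forall>x y. cinner (S x) y = cinner x (adj S y))"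
    unfolding adj_def by (rule someI_ex[OF adj_exists[OF assms]])
  then show "cinner (S x) y = cinner x (adj S y)" and "bounded_op (adj S)" by auto
qed

lemma pos_herm:
  fixes A :: "'a::complex_inner \<Rightarrow> 'a"
  assumes A: "positive_op A"
  shows "cinner (A x) y = cnj (cinner (A y) x)"
proof -
  have B: "bounded_op A" and im: "\<And>z. Im (cinner (A z) z) = 0" using A by (auto simp: positive_op_def)
  define u where "u = cinner (A x) y"
  define v where "v = cinner (A y) x"
  have "cinner (A (x + y)) (x + y) = cinner (A x) x + u + v + cinner (A y) y"
    by (simp add: u_def v_def bop_add[OF B] H.h_add_left H.h_add_right)
  then have i1: "Im u + Im v = 0" using im[of "x + y"] im[of x] im[of y] by simp
  have "cinner (A (x + scaleC \<i> y)) (x + scaleC \<i> y) = cinner (A x) x - \<i> * u + \<i> * v + cinner (A y) y"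
    by (simp add: u_def v_def bop_add[OF B] bop_scale[OF B] H.h_add_left H.h_add_right
        H.h_scale_left H.h_scale_right) (simp add: complex_eq_iff)
  then have i2: "Re v - Re u = 0" using im[of "x + scaleC \<i> y"] im[of x] im[of y] by simp
  show ?thesis using i1 i2 unfolding u_def[symmetric] v_def[symmetric] by (simp add: complex_eq_iff)
qed

lemma ipA_semi:
  fixes A :: "'a::complex_inner \<Rightarrow> 'a"
  assumes A: "positive_op A"
  shows "semi_ip (ipA A)"
proof -
  have B: "bounded_op A" using A by (simp add: positive_op_def)
  show ?thesis
  proof
    show "ipA A (x + y) z = ipA A x z + ipA A y z" for x y z
      by (simp add: ipA_def bop_add[OF B] cinner_add_left)
    show "ipA A (scaleC r x) y = r * ipA A x y" for r x y
      by (simp add: ipA_def bop_scale[OF B] cinner_scaleC_left)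
    show "ipA A x y = cnj (ipA A y x)" for x y
      unfolding ipA_def by (rule pos_herm[OF A])
    show "0 \<le> Re (ipA A x x)" for x
      using A by (simp add: ipA_def positive_op_def)
  qed
qed

lemma normA_eq:
  assumes A: "positive_op A"
  shows "normA A z = semi_ip.nrm (ipA A) z"
proof -
  interpret SA: semi_ip "ipA A" by (rule ipA_semi[OF A])
  show ?thesis by (simp add: SA.nrm_def normA_def ipA_def)
qed

lemma sharp_eq:
  fixes A S :: "'a::chilbert \<Rightarrow> 'a"
  assumes A: "positive_op A" and S: "in_BA A S"
  shows "A (sharpA A S z) = adj S (A z)"
proof -
  have B: "bounded_op A" using A by (simp add: positive_op_def)
  obtain R where R: "bounded_op R" and AR: "\<And>x. A (R x) = adj S (A x)"
    using S by (auto simp: in_BA_def)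
  obtain KA where KA: "\<And>x. cnorm (A x) \<le> KA * cnorm x" and KA0: "KA \<ge> 0" using bop_bound[OF B] by blast
  define M where "M = {k. A k = 0}"
  have sub: "csubspace M" unfolding csubspace_def M_def
    by (auto simp: bop_zero[OF B] bop_add[OF B] bop_scale[OF B])
  have cl: "cclosed M" unfolding cclosed_def
  proof (intro allI impI)
    fix X L assume a: "(\<forall>n. X n \<in> M) \<and> cconv X L"
    show "L \<in> M"
    proof (rule ccontr)
      assume "L \<notin> M"
      then have "A L \<noteq> 0" by (simp add: M_def)
      then have pos: "0 < cnorm (A L)" by (rule cnorm_pos)
      define e where "e = cnorm (A L) / (KA + 1)"
      have e: "e > 0" using pos KA0 by (simp add: e_def)
      obtain N where N: "\<And>n. n \<ge> N \<Longrightarrow> cnorm (X n - L) < e" using a e unfolding cconv_def by blast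
      have "A L = A (L - X N)" using a by (simp add: bop_diff[OF B] M_def)
      then have "cnorm (A L) \<le> KA * cnorm (L - X N)" using KA by simp
      also have "\<dots> \<le> KA * e" using N[of N] KA0
        by (intro mult_left_mono) (auto simp: cnorm_eq H.nrm_commute[of L])
      also have "\<dots> < cnorm (A L)" using pos KA0 unfolding e_def by (simp add: field_simps)
      finally show False by simp
    qed
  qed
  obtain m where mM: "m \<in> M" and orth: "\<And>k. k \<in> M \<Longrightarrow> cinner (R z - m) k = 0"
    using projection[OF sub cl, of "R z"] by blast
  define x0 where "x0 = R z - m"
  have Ax0: "A x0 = adj S (A z)" using mM by (simp add: x0_def bop_diff[OF B] M_def AR)
  have P0: "(\<forall>k. A k = 0 \<longrightarrow> cinner x0 k = 0) \<and> (\<exists>y2. (\<forall>w. cinner y2 (A w) = 0) \<and> adj S (A z) = A x0 + y2)"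
    using orth Ax0 by (auto simp: M_def x0_def)
  have "mp_inverse A (adj S (A z)) = x0"
    unfolding mp_inverse_def
  proof (rule the_equality)
    show "(\<forall>k. A k = 0 \<longrightarrow> cinner x0 k = 0) \<and> (\<exists>y2. (\<forall>w. cinner y2 (A w) = 0) \<and> adj S (A z) = A x0 + y2)"
      by (rule P0)
    fix x assume "(\<forall>k. A k = 0 \<longrightarrow> cinner x k = 0) \<and> (\<exists>y2. (\<forall>w. cinner y2 (A w) = 0) \<and> adj S (A z) = A x + y2)"
    then obtain y2 where ox: "\<And>k. A k = 0 \<Longrightarrow> cinner x k = 0" and y2: "\<And>w. cinner y2 (A w) = 0"
      and eq: "adj S (A z) = A x + y2" by blast
    define d where "d = x - x0"
    have Ad: "A d = - y2" using eq Ax0 by (simp add: d_def bop_diff[OF B] algebra_simps)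
    have "cinner (A d) (A d) = 0" using y2[of d] Ad by (simp add: H.h_minus_left)
    then have Ad0: "A d = 0" by (simp add: cinner_self_eq_zero)
    have "cinner d d = cinner x d - cinner x0 d" by (simp add: d_def H.h_diff_left)
    also have "\<dots> = 0" using ox[OF Ad0] orth[of d] Ad0 by (simp add: M_def x0_def)
    finally show "x = x0" by (simp add: cinner_self_eq_zero d_def)
  qed
  then show ?thesis by (simp add: sharpA_def Ax0)
qed

context semi_ip begin

lemma sym_funpow:
  assumes sym: "\<And>u v. h (Q u) v = h u (Q v)"
  shows "h ((Q ^^ k) u) v = h u ((Q ^^ k) v)"
proof (induction k arbitrary: u v)
  case 0 then show ?case by simp
next
  case (Suc k)
  have "h ((Q ^^ Suc k) u) v = h ((Q ^^ k) u) (Q v)" by (simp add: sym)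
  also have "\<dots> = h u ((Q ^^ k) (Q v))" by (rule Suc.IH)
  also have "(Q ^^ k) (Q v) = (Q ^^ Suc k) v" by (simp add: funpow_swap1)
  finally show ?case .
qed

lemma sym_sq:
  assumes sym: "\<And>u v. h (Q u) v = h u (Q v)"
  shows "(nrm ((Q ^^ k) x))\<^sup>2 \<le> nrm ((Q ^^ (2 * k)) x) * nrm x"
proof -
  have "h ((Q ^^ k) x) ((Q ^^ k) x) = h ((Q ^^ k) ((Q ^^ k) x)) x"
    by (rule sym_funpow[OF sym, symmetric])
  also have "(Q ^^ k) ((Q ^^ k) x) = (Q ^^ (2 * k)) x"
    by (simp add: mult_2 funpow_add)
  finally have e: "h ((Q ^^ k) x) ((Q ^^ k) x) = h ((Q ^^ (2 * k)) x) x" .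
  have "(nrm ((Q ^^ k) x))\<^sup>2 = Re (h ((Q ^^ (2 * k)) x) x)" by (simp add: nrm_sq e)
  also have "\<dots> \<le> cmod (h ((Q ^^ (2 * k)) x) x)" by (rule complex_Re_le_cmod)
  also have "\<dots> \<le> nrm ((Q ^^ (2 * k)) x) * nrm x" by (rule cauchy_schwarz)
  finally show ?thesis .
qed

lemma sym_pow:
  assumes sym: "\<And>u v. h (Q u) v = h u (Q v)"
  shows "(nrm (Q x)) ^ (2 ^ n) \<le> nrm ((Q ^^ (2 ^ n)) x) * (nrm x) ^ (2 ^ n - 1)"
proof (induction n)
  case 0 then show ?case by simp
next
  case (Suc n)
  have "(nrm (Q x)) ^ (2 ^ Suc n) = ((nrm (Q x)) ^ (2 ^ n))\<^sup>2"
    by (simp add: power_mult[symmetric] mult.commute)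
  also have "\<dots> \<le> (nrm ((Q ^^ (2 ^ n)) x) * (nrm x) ^ (2 ^ n - 1))\<^sup>2"
    using Suc.IH by (intro power_mono) (auto simp: nrm_nonneg)
  also have "\<dots> = (nrm ((Q ^^ (2 ^ n)) x))\<^sup>2 * (nrm x) ^ (2 * (2 ^ n - 1))"
    by (simp add: power_mult_distrib power_mult[symmetric] mult.commute)
  also have "\<dots> \<le> (nrm ((Q ^^ (2 * 2 ^ n)) x) * nrm x) * (nrm x) ^ (2 * (2 ^ n - 1))"
    using sym_sq[OF sym, of "2 ^ n" x] by (intro mult_right_mono) (auto simp: nrm_nonneg)
  also have "\<dots> = nrm ((Q ^^ (2 ^ Suc n)) x) * (nrm x) ^ (2 ^ Suc n - 1)"
  proof -
    have p1: "(1::nat) \<le> 2 ^ n" by simp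
    have ex: "2 ^ Suc n - 1 = Suc (2 * (2 ^ n - 1))"
    proof -
      have "\<forall>m::nat. 1 \<le> m \<longrightarrow> 2 * m - 1 = Suc (2 * (m - 1))" by presburger
      then show ?thesis using p1 by simp
    qed
    show ?thesis unfolding ex by (simp add: ac_simps)
  qed
  finally show ?case .
qed

lemma sym_bound:
  fixes Q :: "'a \<Rightarrow> 'a" and g :: "'a \<Rightarrow> real"
  assumes sym: "\<And>u v. h (Q u) v = h u (Q v)"
    and gQ: "\<And>x. g (Q x) \<le> K * g x" and K: "K > 0"
    and ng: "\<And>x. nrm x \<le> a * g x" and g0: "\<And>x. 0 \<le> g x"
  shows "nrm (Q x) \<le> K * nrm x"
proof (cases "nrm x = 0")
  case True
  have "(nrm ((Q ^^ 1) x))\<^sup>2 \<le> nrm ((Q ^^ (2 * 1)) x) * nrm x" by (rule sym_sq[OF sym])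
  then have "(nrm (Q x))\<^sup>2 \<le> 0" using True by simp
  then show ?thesis using True by simp
next
  case False
  then have nx: "0 < nrm x" using nrm_nonneg[of x] by simp
  have gk: "g ((Q ^^ k) x) \<le> K ^ k * g x" for k
  proof (induction k)
    case 0 then show ?case by simp
  next
    case (Suc k)
    have "g ((Q ^^ Suc k) x) \<le> K * g ((Q ^^ k) x)" using gQ by simp
    also have "\<dots> \<le> K * (K ^ k * g x)" using Suc.IH K by (intro mult_left_mono) auto
    finally show ?case by simp
  qed
  show ?thesis
  proof (rule ccontr)
    assume "\<not> ?thesis"
    then have gt: "K * nrm x < nrm (Q x)" by simp
    define t where "t = K * nrm x"
    have t: "t > 0" using K nx by (simp add: t_def)
    define \<rho> where "\<rho> = nrm (Q x) / t"
    have \<rho>: "\<rho> > 1" using gt t by (simp add: \<rho>_def t_def)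
    define C where "C = a * g x / nrm x"
    have bnd: "\<rho> ^ (2 ^ n) \<le> C" for n
    proof -
      define N :: nat where "N = 2 ^ n"
      have N1: "N \<ge> 1" by (simp add: N_def)
      have "(\<rho> * t) ^ N \<le> nrm ((Q ^^ N) x) * (nrm x) ^ (N - 1)"
        using sym_pow[OF sym, of x n] t by (simp add: \<rho>_def N_def)
      also have "\<dots> \<le> (a * (K ^ N * g x)) * (nrm x) ^ (N - 1)"
      proof -
        have "nrm ((Q ^^ N) x) \<le> a * g ((Q ^^ N) x)" by (rule ng)
        also have "\<dots> \<le> a * (K ^ N * g x)"
        proof (cases "a \<ge> 0")
          case True then show ?thesis using gk by (intro mult_left_mono) auto
        next
          case False
          have "a * g x \<le> 0" using False g0[of x] by (simp add: mult_nonpos_nonneg)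
          then show ?thesis using ng[of x] nx by linarith
        qed
        finally show ?thesis by (intro mult_right_mono) (auto simp: nrm_nonneg)
      qed
      finally have i: "\<rho> ^ N * (K ^ N * nrm x ^ N) \<le> (a * g x) * K ^ N * (nrm x) ^ (N - 1)"
        by (simp add: t_def power_mult_distrib ac_simps)
      have "nrm x ^ N = nrm x ^ (N - 1) * nrm x" using N1
        by (metis Suc_diff_le diff_Suc_1 power_Suc2)
      then have "(\<rho> ^ N * nrm x) * (K ^ N * nrm x ^ (N - 1)) \<le> (a * g x) * (K ^ N * (nrm x) ^ (N - 1))"
        using i by (simp add: ac_simps)
      then have "\<rho> ^ N * nrm x \<le> a * g x"
        using K nx by (simp add: mult_le_cancel_right)
      then show ?thesis using nx by (simp add: C_def N_def field_simps)
    qed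
    obtain n :: nat where n: "C / (\<rho> - 1) < real n" using reals_Archimedean2 by blast
    have "1 + real n * (\<rho> - 1) \<le> (1 + (\<rho> - 1)) ^ n"
      by (rule Bernoulli_inequality) (use \<rho> in simp)
    also have "\<dots> = \<rho> ^ n" by simp
    also have "\<dots> \<le> \<rho> ^ (2 ^ n)"
      using \<rho> by (intro power_increasing) (auto intro: less_imp_le[OF less_exp])
    also have "\<dots> \<le> C" by (rule bnd)
    finally have "real n * (\<rho> - 1) < C" by simp
    then show False using n \<rho> by (simp add: field_simps)
  qed
qed

end

locale setting =
  fixes A S :: "'a::chilbert \<Rightarrow> 'a"
  assumes posA: "positive_op A" and BA: "in_BA A S"
begin

sublocale SA: semi_ip "ipA A" by (rule ipA_semi[OF posA])

lemma nA: "normA A z = SA.nrm z" by (rule normA_eq[OF posA])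

lemma bA: "bounded_op A" using posA by (simp add: positive_op_def)
lemma bS: "bounded_op S" using BA by (simp add: in_BA_def)

lemma sharp_adj: "ipA A (sharpA A S x) y = ipA A x (S y)"
proof -
  have "ipA A (sharpA A S x) y = cinner (adj S (A x)) y" by (simp add: ipA_def sharp_eq[OF posA BA])
  also have "\<dots> = cnj (cinner y (adj S (A x)))" by (rule cinner_commute)
  also have "\<dots> = cnj (cinner (S y) (A x))" by (simp add: adj_prop(1)[OF bS])
  also have "\<dots> = ipA A x (S y)" by (metis cinner_commute complex_cnj_cnj ipA_def)
  finally show ?thesis .
qed

lemma S_bound: "\<exists>C\<ge>0. \<forall>x. SA.nrm (S x) \<le> C * SA.nrm x"
proof -
  obtain R where R: "bounded_op R" and AR: "\<And>x. A (R x) = adj S (A x)"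
    using BA by (auto simp: in_BA_def)
  obtain KA where KA0: "KA \<ge> 0" and KA: "\<And>x. cnorm (A x) \<le> KA * cnorm x" using bop_bound[OF bA] by blast
  obtain KR where KR0: "KR \<ge> 0" and KR: "\<And>x. cnorm (R x) \<le> KR * cnorm x" using bop_bound[OF R] by blast
  obtain KS where KS0: "KS \<ge> 0" and KS: "\<And>x. cnorm (S x) \<le> KS * cnorm x" using bop_bound[OF bS] by blast
  define K where "K = KR * KS + 1"
  have K: "K > 0" using mult_nonneg_nonneg[OF KR0 KS0] by (simp add: K_def)
  have gQ: "cnorm (R (S x)) \<le> K * cnorm x" for x
  proof -
    have "cnorm (R (S x)) \<le> KR * (KS * cnorm x)"
      using KR[of "S x"] KS[of x] KR0 by (smt (verit) mult_left_mono)
    also have "\<dots> \<le> K * cnorm x" using H.nrm_nonneg[of x]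
      by (simp add: K_def cnorm_eq algebra_simps)
    finally show ?thesis .
  qed
  have ng: "SA.nrm x \<le> sqrt KA * cnorm x" for x
  proof -
    have "(SA.nrm x)\<^sup>2 = Re (cinner (A x) x)" by (simp add: SA.nrm_sq ipA_def)
    also have "\<dots> \<le> cmod (cinner (A x) x)" by (rule complex_Re_le_cmod)
    also have "\<dots> \<le> cnorm (A x) * cnorm x" by (simp add: cnorm_eq H.cauchy_schwarz)
    also have "\<dots> \<le> KA * cnorm x * cnorm x" using KA[of x] by (intro mult_right_mono) (auto simp: cnorm_eq H.nrm_nonneg)
    also have "\<dots> = (sqrt KA * cnorm x)\<^sup>2" using KA0 by (simp add: power2_eq_square power_mult_distrib)
    finally have "(SA.nrm x)\<^sup>2 \<le> (sqrt KA * cnorm x)\<^sup>2" .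
    moreover have "0 \<le> sqrt KA * cnorm x" using KA0 H.nrm_nonneg[of x] by (simp add: cnorm_eq)
    ultimately show ?thesis by (rule power2_le_imp_le)
  qed
  have sym: "ipA A (R (S u)) v = ipA A u (R (S v))" for u v
  proof -
    have "ipA A (R (S u)) v = cinner (adj S (A (S u))) v" by (simp add: ipA_def AR)
    also have "\<dots> = cnj (cinner (S v) (A (S u)))"
      by (metis adj_prop(1)[OF bS] cinner_commute)
    also have "\<dots> = cinner (S u) (A (S v))"
      by (metis cinner_commute complex_cnj_cnj pos_herm[OF posA])
    also have "\<dots> = cinner u (adj S (A (S v)))"
      by (simp add: adj_prop(1)[OF bS])
    also have "\<dots> = cinner u (A (R (S v)))" by (simp add: AR)
    also have "\<dots> = ipA A u (R (S v))" unfolding ipA_def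
      by (metis pos_herm[OF posA] cinner_commute)
    finally show ?thesis .
  qed
  have QB: "SA.nrm (R (S x)) \<le> K * SA.nrm x" for x
    by (rule SA.sym_bound[of "\<lambda>x. R (S x)" cnorm K "sqrt KA", OF sym gQ K ng]) (simp add: cnorm_eq H.nrm_nonneg)
  have "SA.nrm (S x) \<le> sqrt K * SA.nrm x" for x
  proof -
    have "ipA A (S x) (S x) = ipA A (R (S x)) x"
    proof -
      have "ipA A (S x) (S x) = cnj (cinner (S x) (A (S x)))" by (metis ipA_def cinner_commute)
      also have "\<dots> = cnj (cinner x (A (R (S x))))" by (simp add: adj_prop(1)[OF bS] AR)
      also have "\<dots> = ipA A (R (S x)) x" by (metis ipA_def cinner_commute)
      finally show ?thesis .
    qed
    then have "(SA.nrm (S x))\<^sup>2 = Re (ipA A (R (S x)) x)" by (simp add: SA.nrm_sq)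
    also have "\<dots> \<le> cmod (ipA A (R (S x)) x)" by (rule complex_Re_le_cmod)
    also have "\<dots> \<le> SA.nrm (R (S x)) * SA.nrm x" by (rule SA.cauchy_schwarz)
    also have "\<dots> \<le> K * SA.nrm x * SA.nrm x" using QB by (intro mult_right_mono) (auto simp: SA.nrm_nonneg)
    also have "\<dots> = (sqrt K * SA.nrm x)\<^sup>2" using K by (simp add: power2_eq_square power_mult_distrib)
    finally have "(SA.nrm (S x))\<^sup>2 \<le> (sqrt K * SA.nrm x)\<^sup>2" .
    moreover have "0 \<le> sqrt K * SA.nrm x" using K SA.nrm_nonneg[of x] by simp
    ultimately show ?thesis by (rule power2_le_imp_le)
  qed
  then show ?thesis using K by (intro exI[of _ "sqrt K"]) auto
qed

lemma sharp_bound: "\<exists>C\<ge>0. \<forall>x. SA.nrm (sharpA A S x) \<le> C * SA.nrm x"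
proof -
  obtain C where C0: "C \<ge> 0" and C: "\<And>x. SA.nrm (S x) \<le> C * SA.nrm x" using S_bound by blast
  have "SA.nrm (sharpA A S x) \<le> C * SA.nrm x" for x
  proof (cases "SA.nrm (sharpA A S x) = 0")
    case True then show ?thesis using C0 by (simp add: SA.nrm_nonneg)
  next
    case False
    then have pos: "0 < SA.nrm (sharpA A S x)" using SA.nrm_nonneg by (simp add: less_le)
    have "(SA.nrm (sharpA A S x))\<^sup>2 = Re (ipA A x (S (sharpA A S x)))" by (simp add: SA.nrm_sq sharp_adj)
    also have "\<dots> \<le> cmod (ipA A x (S (sharpA A S x)))" by (rule complex_Re_le_cmod)
    also have "\<dots> \<le> SA.nrm x * SA.nrm (S (sharpA A S x))" by (rule SA.cauchy_schwarz)
    also have "\<dots> \<le> SA.nrm x * (C * SA.nrm (sharpA A S x))" using C by (intro mult_left_mono) (auto simp: SA.nrm_nonneg)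
    finally have "SA.nrm (sharpA A S x) * SA.nrm (sharpA A S x) \<le> SA.nrm (sharpA A S x) * (C * SA.nrm x)"
      by (simp add: power2_eq_square ac_simps)
    then show ?thesis using pos by simp
  qed
  then show ?thesis using C0 by blast
qed

end

context setting begin

abbreviation "sh \<equiv> sharpA A S"

lemma real_sq_sum: "(cmod (complex_of_real r + w))\<^sup>2 = r\<^sup>2 + 2 * r * Re w + (cmod w)\<^sup>2"
  by (simp only: cmod_power2) (simp add: power2_eq_square algebra_simps)

lemma per_z:
  fixes z
  assumes z1: "SA.nrm z = 1"
  defines "a \<equiv> sh (S z)" and "b \<equiv> S z"
  shows "(cmod (ipA A b z))\<^sup>2 + (SA.nrm b) ^ 4
     \<le> (cmod (ipA A (a + b) z))\<^sup>2 + cmod (ipA A (sh (S (S z))) z)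
        + 1/2 * SA.nrm (sh (S a) + a) - 2 * deltaA A a b z"
proof -
  let ?h = "ipA A" and ?n = "SA.nrm"
  have hac: "?h a z = complex_of_real ((?n b)\<^sup>2)"
    unfolding a_def b_def using SA.h_self_eq[of "S z"] by (simp add: sharp_adj SA.nrm_sq)
  have sq: "(cmod (?h (a + b) z))\<^sup>2 = ((?n b)\<^sup>2)\<^sup>2 + 2 * (?n b)\<^sup>2 * Re (?h b z) + (cmod (?h b z))\<^sup>2"
    unfolding SA.h_add_left hac by (rule real_sq_sum)
  have cb: "cmod (?h z b) = cmod (?h b z)" using SA.h_herm[of z b] by simp
  have cac: "cmod (?h a z) = (?n b)\<^sup>2" unfolding hac norm_of_real by simp
  have main: "cmod (?h a z) * cmod (?h z b) \<le> 1/2 * (?n a * ?n b + cmod (?h a b)) - deltaA A a b z"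
  proof (cases "?n a * ?n b = 0")
    case True
    then have "?h a z = 0 \<or> ?h z b = 0" using SA.nrm_zero_h[of a z] SA.nrm_zero_h'[of b z] by auto
    moreover have "deltaA A a b z = 0" using True by (simp add: deltaA_def nA)
    moreover have "0 \<le> ?n a * ?n b + cmod (?h a b)" using SA.nrm_nonneg[of a] SA.nrm_nonneg[of b] by simp
    ultimately show ?thesis by auto
  next
    case False
    then have pa: "0 < ?n a" and pb: "0 < ?n b" using SA.nrm_nonneg[of a] SA.nrm_nonneg[of b]
      by (auto simp: less_le)
    have d: "deltaA A a b z = ?n b / ?n a * (cmod (?h a z) * (INF l. ?n (z - scaleC l b))
         - 1/2 * (INF m. ?n (a - scaleC m b)))\<^sup>2"
      using False by (simp add: deltaA_def nA)
    show ?thesis unfolding d by (rule SA.buzano_refined[OF z1 pa pb])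
  qed
  have hab: "cmod (?h a b) = cmod (?h (sh (S (S z))) z)"
  proof -
    have "?h a b = ?h (S z) (S (S z))" unfolding a_def b_def by (simp add: sharp_adj)
    also have "\<dots> = cnj (?h (S (S z)) (S z))" by (rule SA.h_herm)
    also have "?h (S (S z)) (S z) = ?h (sh (S (S z))) z" by (simp add: sharp_adj)
    finally show ?thesis by simp
  qed
  have amgm: "?n a * ?n b \<le> 1/2 * ((?n a)\<^sup>2 + (?n b)\<^sup>2)"
    using sum_squares_bound[of "?n a" "?n b"] by (simp add: power2_eq_square algebra_simps)
  have sum: "(?n a)\<^sup>2 + (?n b)\<^sup>2 = Re (?h (sh (S a) + a) z)"
  proof -
    have "?h (sh (S a)) z = ?h (S a) b" by (simp add: sharp_adj b_def)
    also have "\<dots> = cnj (?h b (S a))" by (rule SA.h_herm)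
    also have "?h b (S a) = ?h a a" by (simp add: a_def b_def sharp_adj)
    finally have e1: "Re (?h (sh (S a)) z) = (?n a)\<^sup>2" by (simp add: SA.nrm_sq)
    have e2: "Re (?h a z) = (?n b)\<^sup>2" by (simp add: hac)
    show ?thesis using e1 e2 by (simp add: SA.h_add_left)
  qed
  have opn: "Re (?h (sh (S a) + a) z) \<le> ?n (sh (S a) + a)"
    using complex_Re_le_cmod[of "?h (sh (S a) + a) z"] SA.cauchy_schwarz[of "sh (S a) + a" z] z1 by simp
  have "Re (?h b z) \<ge> - cmod (?h b z)" using abs_Re_le_cmod[of "?h b z"] by linarith
  then have "(- Re (?h b z)) * (?n b)\<^sup>2 \<le> cmod (?h b z) * (?n b)\<^sup>2"
    by (intro mult_right_mono) auto
  then have "- 2 * (?n b)\<^sup>2 * Re (?h b z) \<le> 2 * (?n b)\<^sup>2 * cmod (?h b z)"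
    by (simp add: algebra_simps)
  then have "(cmod (?h b z))\<^sup>2 + (?n b) ^ 4 \<le> (cmod (?h (a + b) z))\<^sup>2 + 2 * (cmod (?h a z) * cmod (?h z b))"
    using sq cb cac by (simp add: power_mult[symmetric] algebra_simps)
  also have "\<dots> \<le> (cmod (?h (a + b) z))\<^sup>2 + (?n a * ?n b + cmod (?h a b)) - 2 * deltaA A a b z"
    using main by (simp add: field_simps)
  also have "\<dots> \<le> (cmod (?h (a + b) z))\<^sup>2 + cmod (?h (sh (S (S z))) z) + 1/2 * ?n (sh (S a) + a) - 2 * deltaA A a b z"
    using amgm sum opn hab by (simp add: field_simps)
  finally show ?thesis .
qed

end

theorem theorem2p6:
  fixes A S :: "'a::chilbert \<Rightarrow> 'a"
  assumes "positive_op A"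
    and "A \<noteq> (\<lambda>x. 0)"
    and "in_BA A S"
  shows "(domegaA A S)\<^sup>2
    \<le> (omegaA A (\<lambda>z. sharpA A S (S z) + S z))\<^sup>2
       + omegaA A (\<lambda>z. sharpA A S (S (S z)))
       + 1/2 * opnormA A (\<lambda>z. sharpA A S (S (sharpA A S (S z))) + sharpA A S (S z))
       - 2 * (INF z\<in>{z. normA A z = 1}. deltaA A (sharpA A S (S z)) (S z) z)"
proof -
  interpret setting A S using assms(1,3) by unfold_locales
  define U where "U = {z. normA A z = 1}"
  have U: "z \<in> U \<longleftrightarrow> SA.nrm z = 1" for z by (simp add: U_def nA)
  have Une: "U \<noteq> {}"
  proof -
    obtain x where Ax: "A x \<noteq> 0" using assms(2) by blast
    have "\<exists>y. 0 < SA.nrm y"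
    proof (rule ccontr)
      assume "\<not> ?thesis"
      then have "SA.nrm x = 0" using SA.nrm_nonneg[of x] by (simp add: not_less) (metis antisym SA.nrm_nonneg)
      then have "ipA A x (A x) = 0" by (rule SA.nrm_zero_h)
      then show False using Ax by (simp add: ipA_def cinner_self_eq_zero)
    qed
    then obtain y where y: "0 < SA.nrm y" by blast
    have "SA.nrm (scaleC (complex_of_real (1 / SA.nrm y)) y) = 1"
      using y unfolding SA.nrm_scale norm_of_real by simp
    then show ?thesis using U by blast
  qed
  obtain CS where CS0: "CS \<ge> 0" and CS: "\<And>x. SA.nrm (S x) \<le> CS * SA.nrm x" using S_bound by blast
  obtain CH where CH0: "CH \<ge> 0" and CH: "\<And>x. SA.nrm (sh x) \<le> CH * SA.nrm x" using sharp_bound by blast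
  have bS: "SA.nrm (S x) \<le> CS" if "x \<in> U" for x using CS[of x] that U by simp
  have bT: "SA.nrm (sh (S x)) \<le> CH * CS" if "x \<in> U" for x
    using CH[of "S x"] bS[OF that] CH0 by (smt (verit) mult_left_mono)
  have bSS: "SA.nrm (S (S x)) \<le> CS * CS" if "x \<in> U" for x
    using CS[of "S x"] bS[OF that] CS0 by (smt (verit) mult_left_mono)
  have bTSS: "SA.nrm (sh (S (S x))) \<le> CH * (CS * CS)" if "x \<in> U" for x
    using CH[of "S (S x)"] bSS[OF that] CH0 by (smt (verit) mult_left_mono)
  have bST: "SA.nrm (S (sh (S x))) \<le> CS * (CH * CS)" if "x \<in> U" for x
    using CS[of "sh (S x)"] bT[OF that] CS0 by (smt (verit) mult_left_mono)
  have bTT: "SA.nrm (sh (S (sh (S x)))) \<le> CH * (CS * (CH * CS))" if "x \<in> U" for x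
    using CH[of "S (sh (S x))"] bST[OF that] CH0 by (smt (verit) mult_left_mono)
  have cs1: "cmod (ipA A w x) \<le> SA.nrm w" if "x \<in> U" for w x
    using SA.cauchy_schwarz[of w x] that U by simp
  have bdd1: "bdd_above ((\<lambda>z. cmod (ipA A (sh (S z) + S z) z)) ` U)"
  proof (rule bdd_aboveI2)
    fix x assume x: "x \<in> U"
    have "cmod (ipA A (sh (S x) + S x) x) \<le> SA.nrm (sh (S x) + S x)" by (rule cs1[OF x])
    also have "\<dots> \<le> SA.nrm (sh (S x)) + SA.nrm (S x)" by (rule SA.nrm_triangle)
    also have "\<dots> \<le> CH * CS + CS" using bT[OF x] bS[OF x] by linarith
    finally show "cmod (ipA A (sh (S x) + S x) x) \<le> CH * CS + CS" .
  qed
  have bdd2: "bdd_above ((\<lambda>z. cmod (ipA A (sh (S (S z))) z)) ` U)"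
  proof (rule bdd_aboveI2)
    fix x assume x: "x \<in> U"
    show "cmod (ipA A (sh (S (S x))) x) \<le> CH * (CS * CS)" using cs1[OF x, of "sh (S (S x))"] bTSS[OF x] by linarith
  qed
  have bdd3: "bdd_above ((\<lambda>z. normA A (sh (S (sh (S z))) + sh (S z))) ` U)"
  proof (rule bdd_aboveI2)
    fix x assume x: "x \<in> U"
    have "normA A (sh (S (sh (S x))) + sh (S x)) \<le> SA.nrm (sh (S (sh (S x)))) + SA.nrm (sh (S x))"
      unfolding nA by (rule SA.nrm_triangle)
    also have "\<dots> \<le> CH * (CS * (CH * CS)) + CH * CS" using bTT[OF x] bT[OF x] by linarith
    finally show "normA A (sh (S (sh (S x))) + sh (S x)) \<le> CH * (CS * (CH * CS)) + CH * CS" .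
  qed
  have dnn: "0 \<le> deltaA A a b c" for a b c
    by (simp add: deltaA_def nA SA.nrm_nonneg)
  have bdd4: "bdd_below ((\<lambda>z. deltaA A (sh (S z)) (S z) z) ` U)"
    by (rule bdd_belowI2[of _ 0]) (rule dnn)
  define w1 where "w1 = omegaA A (\<lambda>z. sh (S z) + S z)"
  define w2 where "w2 = omegaA A (\<lambda>z. sh (S (S z)))"
  define w3 where "w3 = opnormA A (\<lambda>z. sh (S (sh (S z))) + sh (S z))"
  define I where "I = (INF z\<in>U. deltaA A (sh (S z)) (S z) z)"
  define Rt where "Rt = w1\<^sup>2 + w2 + 1/2 * w3 - 2 * I"
  define f where "f z = (cmod (ipA A (S z) z))\<^sup>2 + (normA A (S z)) ^ 4" for z
  have fle: "f z \<le> Rt" if z: "z \<in> U" for z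
  proof -
    have z1: "SA.nrm z = 1" using z U by simp
    have P: "f z \<le> (cmod (ipA A (sh (S z) + S z) z))\<^sup>2 + cmod (ipA A (sh (S (S z))) z)
        + 1/2 * SA.nrm (sh (S (sh (S z))) + sh (S z)) - 2 * deltaA A (sh (S z)) (S z) z"
      unfolding f_def nA by (rule per_z[OF z1])
    have a1: "cmod (ipA A (sh (S z) + S z) z) \<le> w1"
      unfolding w1_def omegaA_def U_def[symmetric] by (rule cSUP_upper[OF z bdd1])
    have a1': "(cmod (ipA A (sh (S z) + S z) z))\<^sup>2 \<le> w1\<^sup>2"
      using a1 by (intro power_mono) auto
    have a2: "cmod (ipA A (sh (S (S z))) z) \<le> w2"
      unfolding w2_def omegaA_def U_def[symmetric] by (rule cSUP_upper[OF z bdd2])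
    have a3: "normA A (sh (S (sh (S z))) + sh (S z)) \<le> w3"
      unfolding w3_def opnormA_def U_def[symmetric] by (rule cSUP_upper[OF z bdd3])
    have a4: "I \<le> deltaA A (sh (S z)) (S z) z"
      unfolding I_def by (rule cINF_lower[OF bdd4 z])
    show ?thesis using P a1' a2 a3 a4 unfolding Rt_def nA by (simp add: field_simps)
  qed
  obtain z0 where z0: "z0 \<in> U" using Une by blast
  have f0: "0 \<le> f z" for z by (simp add: f_def nA SA.nrm_nonneg)
  have Rt0: "0 \<le> Rt" using fle[OF z0] f0[of z0] by linarith
  have dom: "domegaA A S = (SUP z\<in>U. sqrt (f z))" by (simp add: domegaA_def U_def f_def)
  have up: "(SUP z\<in>U. sqrt (f z)) \<le> sqrt Rt"
    by (rule cSUP_least[OF Une]) (simp add: fle)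
  have bddf: "bdd_above ((\<lambda>z. sqrt (f z)) ` U)"
    by (rule bdd_aboveI2[of _ _ "sqrt Rt"]) (simp add: fle)
  have lo: "0 \<le> (SUP z\<in>U. sqrt (f z))"
    using cSUP_upper[OF z0 bddf] real_sqrt_ge_zero[OF f0[of z0]] by linarith
  have "(domegaA A S)\<^sup>2 \<le> (sqrt Rt)\<^sup>2" unfolding dom using up lo by (intro power_mono) auto
  also have "\<dots> = Rt" using Rt0 by simp
  finally show ?thesis
    unfolding Rt_def w1_def w2_def w3_def I_def U_def .
qed

end
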